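(* Let $n\ge2$, $\mathbf{a}\in\mathbb{C}^n$, $\beta>0$ and $f(\mathbf{z})=\frac12|\mathbf{a}^*\mathbf{z}|^2+\frac{\beta}{2}\|\mathbf{z}\|_4^4$ on $\mathbb{CS}^{n-1}$. There exists a local minimizer $\mathbf{z}$ of $f$ on $\mathbb{CS}^{n-1}$ with $\mathbf{a}^*\mathbf{z}=0$ if and only if either $\|\mathbf{a}\|_\infty\le\frac12\|\mathbf{a}\|_1$, or $\mathbf{a}$ has exactly one nonzero component and $\|\mathbf{a}\|_2^2\ge 2\beta/(n-1)$. Further, if $\mathbf{a}$ satisfies one of these conditions, then the local minimizers $\mathbf{z}$ with $\mathbf{a}^*\mathbf{z}=0$ are exactly the global minimizers of $f$ on $\mathbb{CS}^{n-1}$.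
   Context: $\mathbb{CS}^{n-1}=\{\mathbf{z}\in\mathbb{C}^n:\|\mathbf{z}\|_2=1\}$; $\|\mathbf{z}\|_4^4=\sum_k|z_k|^4$. *)

theory Defs
  imports "HOL-Analysis.Analysis"
begin

text \<open>Vectors in C^n are modelled as complex ^ 'n; the library norm is the Euclidean 2-norm.\<close>

definition inner_c :: "complex ^ 'n \<Rightarrow> complex ^ 'n \<Rightarrow> complex" where
  "inner_c a z = (\<Sum>k\<in>UNIV. cnj (a $ k) * z $ k)"

definition norm1 :: "complex ^ 'n \<Rightarrow> real" where
  "norm1 a = (\<Sum>k\<in>UNIV. cmod (a $ k))"

definition norminf :: "complex ^ 'n \<Rightarrow> real" where
  "norminf a = Max ((\<lambda>k. cmod (a $ k)) ` UNIV)"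

definition norm4_4 :: "complex ^ 'n \<Rightarrow> real" where
  "norm4_4 z = (\<Sum>k\<in>UNIV. cmod (z $ k) ^ 4)"

definition fobj :: "complex ^ 'n \<Rightarrow> real \<Rightarrow> complex ^ 'n \<Rightarrow> real" where
  "fobj a \<beta> z = (1/2) * cmod (inner_c a z) ^ 2 + (\<beta>/2) * norm4_4 z"

definition csphere :: "(complex ^ 'n) set" where
  "csphere = {z. norm z = 1}"

definition local_min_on :: "(complex ^ 'n \<Rightarrow> real) \<Rightarrow> (complex ^ 'n) set \<Rightarrow> complex ^ 'n \<Rightarrow> bool" where
  "local_min_on f S z \<longleftrightarrow> z \<in> S \<and> (\<exists>e>0. \<forall>w\<in>S. dist w z < e \<longrightarrow> f z \<le> f w)"

definition global_min_on :: "(complex ^ 'n \<Rightarrow> real) \<Rightarrow> (complex ^ 'n) set \<Rightarrow> complex ^ 'n \<Rightarrow> bool" where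
  "global_min_on f S z \<longleftrightarrow> z \<in> S \<and> (\<forall>w\<in>S. f z \<le> f w)"

end

theory Submission
  imports Defs
begin


lemma norm_sq_vec: "(norm (z::complex^'n))^2 = (\<Sum>l\<in>UNIV. (cmod (z$l))^2)"
  unfolding norm_vec_def L2_set_def by (simp add: sum_nonneg)

lemma csphere_iff: "z \<in> csphere \<longleftrightarrow> (\<Sum>l\<in>UNIV. (cmod (z$(l::'n::finite)))^2) = 1"
proof -
  have "norm z = 1 \<longleftrightarrow> (norm z)^2 = 1"
    by (smt (verit) norm_ge_zero power2_eq_1_iff)
  then show ?thesis unfolding csphere_def using norm_sq_vec[of z] by simp
qed

lemma cmod_add_sq: "(cmod (x + complex_of_real t * y))^2 = (cmod x)^2 + 2*t*Re(cnj x * y) + t^2 * (cmod y)^2"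
  unfolding cmod_power2 by (simp add: power2_eq_square algebra_simps)


lemma cnj_mult_self: "cnj x * x = complex_of_real ((cmod x)^2)"
  using complex_norm_square[of x] by (simp add: mult.commute)

lemma sum_two:
  assumes "i \<noteq> j" "\<And>l. l \<noteq> i \<Longrightarrow> l \<noteq> j \<Longrightarrow> g l = 0"
  shows "(\<Sum>l\<in>(UNIV::'n::finite set). g l) = g i + g j"
proof -
  have "(\<Sum>l\<in>UNIV. g l) = (\<Sum>l\<in>{i,j}. g l)"
    by (rule sum.mono_neutral_right) (auto simp: assms)
  then show ?thesis using assms by simp
qed

lemma sum_one:
  assumes "\<And>l. l \<noteq> i \<Longrightarrow> g l = 0"
  shows "(\<Sum>l\<in>(UNIV::'n::finite set). g l) = g i"
proof -
  have "(\<Sum>l\<in>UNIV. g l) = (\<Sum>l\<in>{i}. g l)"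
    by (rule sum.mono_neutral_right) (auto simp: assms)
  then show ?thesis by simp
qed

lemma sq_sum_bound:
  fixes x :: "'a \<Rightarrow> real"
  assumes "card A > 0"
  shows "(\<Sum>l\<in>A. x l)^2 / card A \<le> (\<Sum>l\<in>A. (x l)^2)"
proof -
  have "(\<Sum>l\<in>A. x l)^2 \<le> (\<Sum>l\<in>A. (x l)^2) * card A" by (rule sum_squared_le_sum_of_squares)
  then show ?thesis using assms by (simp add: divide_le_eq)
qed

definition pw :: "complex^'n \<Rightarrow> 'n \<Rightarrow> real" where "pw z l = (cmod (z$l))^2"
definition mw :: "complex^'n \<Rightarrow> complex^'n \<Rightarrow> 'n \<Rightarrow> real" where "mw z v l = Re (cnj (z$l) * v$l)"
definition VV :: "complex^'n \<Rightarrow> real" where "VV v = (\<Sum>l\<in>UNIV. pw v l)"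
definition QQ :: "complex^'n \<Rightarrow> real" where "QQ z = (\<Sum>l\<in>UNIV. (pw z l)^2)"
definition wpath :: "complex^'n \<Rightarrow> complex^'n \<Rightarrow> real \<Rightarrow> complex^'n" where
  "wpath z v t = (\<chi> l. complex_of_real (1 / sqrt (1 + t^2 * VV v)) * (z$l + complex_of_real t * v$l))"

lemma pw_nonneg: "pw z l \<ge> 0" by (simp add: pw_def)
lemma VV_nonneg: "VV v \<ge> 0" by (simp add: VV_def pw_def sum_nonneg)

lemma QQ_norm4: "norm4_4 z = QQ z"
  unfolding norm4_4_def QQ_def pw_def by (simp add: power_mult[symmetric])

lemma wpath_comp:
  "pw (wpath z v t) l = (pw z l + 2*t*mw z v l + t^2 * pw v l) / (1 + t^2 * VV v)"
proof -
  define D where "D = 1 + t^2 * VV v"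
  have D: "D > 0" unfolding D_def using VV_nonneg[of v] by (simp add: add_pos_nonneg)
  have "pw (wpath z v t) l = (cmod (complex_of_real (1 / sqrt D)))^2 * (cmod (z$l + complex_of_real t * v$l))^2"
    unfolding pw_def wpath_def D_def by (simp add: norm_mult norm_divide power_mult_distrib power_divide)
  also have "(cmod (complex_of_real (1 / sqrt D)))^2 = 1 / D"
    using D by (simp add: norm_divide power_divide)
  finally show ?thesis unfolding cmod_add_sq D_def pw_def mw_def by simp
qed

lemma wpath_sphere:
  assumes "z \<in> csphere" "(\<Sum>l\<in>UNIV. mw z v l) = 0"
  shows "wpath z v t \<in> csphere"
proof -
  define D where "D = 1 + t^2 * VV v"
  have D: "D > 0" unfolding D_def using VV_nonneg[of v] by (simp add: add_pos_nonneg)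
  have z1: "(\<Sum>l\<in>UNIV. pw z l) = 1" using assms(1) by (simp add: csphere_iff pw_def)
  have "(\<Sum>l\<in>UNIV. pw (wpath z v t) l) = (\<Sum>l\<in>UNIV. (pw z l + 2*t*mw z v l + t^2 * pw v l)) / D"
    unfolding wpath_comp D_def by (simp add: sum_divide_distrib)
  also have "(\<Sum>l\<in>UNIV. (pw z l + 2*t*mw z v l + t^2 * pw v l)) = D"
    using z1 assms(2) unfolding D_def VV_def by (simp add: sum.distrib sum_distrib_left[symmetric])
  finally show ?thesis using D by (simp add: csphere_iff pw_def)
qed

lemma inner_c_wpath:
  assumes "inner_c a z = 0"
  shows "inner_c a (wpath z v t) = complex_of_real (t / sqrt (1 + t^2 * VV v)) * inner_c a v"
proof -
  define c where "c = complex_of_real (1 / sqrt (1 + t^2 * VV v))"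
  have "inner_c a (wpath z v t) = (\<Sum>k\<in>UNIV. c * (cnj (a$k) * z$k) + c * complex_of_real t * (cnj (a$k) * v$k))"
    unfolding inner_c_def wpath_def c_def[symmetric] by (simp add: algebra_simps)
  also have "\<dots> = c * inner_c a z + c * complex_of_real t * inner_c a v"
    unfolding inner_c_def by (simp add: sum.distrib sum_distrib_left)
  finally show ?thesis using assms unfolding c_def by simp
qed

lemma wpath_tendsto: "((\<lambda>t. wpath z v t) \<longlongrightarrow> z) (at_right 0)"
proof -
  have "((\<lambda>t. wpath z v t) \<longlongrightarrow> wpath z v 0) (at_right 0)"
    unfolding wpath_def by (intro tendsto_intros) auto
  moreover have "wpath z v 0 = z" unfolding wpath_def by (simp add: vec_eq_iff)
  ultimately show ?thesis by simp
qed

definition Pol :: "complex^'n \<Rightarrow> real \<Rightarrow> complex^'n \<Rightarrow> complex^'n \<Rightarrow> real \<Rightarrow> real" where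
  "Pol a \<beta> z v t = (1/2) * t^2 * (cmod (inner_c a v))^2 * (1 + t^2 * VV v)
     + (\<beta>/2) * (\<Sum>l\<in>UNIV. (pw z l + 2*t*mw z v l + t^2 * pw v l)^2)
     - (\<beta>/2) * QQ z * (1 + t^2 * VV v)^2"

lemma fobj_wpath_less:
  assumes "inner_c a z = 0" "Pol a \<beta> z v t < 0"
  shows "fobj a \<beta> (wpath z v t) < fobj a \<beta> z"
proof -
  define D where "D = 1 + t^2 * VV v"
  have D: "D > 0" unfolding D_def using VV_nonneg[of v] by (simp add: add_pos_nonneg)
  define X where "X l = pw z l + 2*t*mw z v l + t^2 * pw v l" for l
  have fz: "fobj a \<beta> z = (\<beta>/2) * QQ z"
    using assms(1) by (simp add: fobj_def QQ_norm4)
  have h1: "(cmod (inner_c a (wpath z v t)))^2 = t^2 / D * (cmod (inner_c a v))^2"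
    using D unfolding inner_c_wpath[OF assms(1)] D_def[symmetric]
    by (simp add: norm_mult norm_divide power_mult_distrib power_divide)
  have h2: "norm4_4 (wpath z v t) = (\<Sum>l\<in>UNIV. (X l)^2) / D^2"
    unfolding QQ_norm4 QQ_def wpath_comp X_def D_def
    by (simp add: power_divide sum_divide_distrib)
  have fw: "fobj a \<beta> (wpath z v t) = ((1/2) * t^2 * (cmod (inner_c a v))^2 * D
        + (\<beta>/2) * (\<Sum>l\<in>UNIV. (X l)^2)) / D^2"
    unfolding fobj_def h1 h2 using D by (simp add: field_simps power2_eq_square)
  have "(1/2) * t^2 * (cmod (inner_c a v))^2 * D + (\<beta>/2) * (\<Sum>l\<in>UNIV. (X l)^2) < (\<beta>/2) * QQ z * D^2"
    using assms(2) unfolding Pol_def X_def D_def by simp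
  then have "fobj a \<beta> (wpath z v t) < (\<beta>/2) * QQ z * D^2 / D^2"
    unfolding fw using D by (intro divide_strict_right_mono) auto
  then show ?thesis using D fz by simp
qed

lemma descent_general:
  assumes "z \<in> csphere" "inner_c a z = 0" "(\<Sum>l\<in>UNIV. mw z v l) = 0"
    and ev: "eventually (\<lambda>t. Pol a \<beta> z v t < 0) (at_right 0)"
  shows "\<not> local_min_on (fobj a \<beta>) csphere z"
proof
  assume "local_min_on (fobj a \<beta>) csphere z"
  then obtain e where e: "e > 0" and min: "\<forall>w\<in>csphere. dist w z < e \<longrightarrow> fobj a \<beta> z \<le> fobj a \<beta> w"
    unfolding local_min_on_def by blast
  have "eventually (\<lambda>t. dist (wpath z v t) z < e) (at_right 0)"
    using wpath_tendsto[of z v] e by (rule tendstoD)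
  with ev have "eventually (\<lambda>t. dist (wpath z v t) z < e \<and> Pol a \<beta> z v t < 0) (at_right 0)"
    by (simp add: eventually_conj_iff)
  then obtain t where t: "dist (wpath z v t) z < e" "Pol a \<beta> z v t < 0"
    using eventually_happens[of _ "at_right (0::real)"] by auto
  have "wpath z v t \<in> csphere" using wpath_sphere assms by blast
  then have "fobj a \<beta> z \<le> fobj a \<beta> (wpath z v t)" using min t by blast
  moreover have "fobj a \<beta> (wpath z v t) < fobj a \<beta> z" using fobj_wpath_less assms(2) t by blast
  ultimately show False by simp
qed

lemma Pol_expand:
  "Pol a \<beta> z v t = t * ((1/2) * t * (cmod (inner_c a v))^2 * (1 + t^2 * VV v)
     + (\<beta>/2) * (4 * (\<Sum>l\<in>UNIV. pw z l * mw z v l) + t * (\<Sum>l\<in>UNIV. 4 * (mw z v l)^2 + 2 * pw z l * pw v l)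
         + 4 * t^2 * (\<Sum>l\<in>UNIV. mw z v l * pw v l) + t^3 * (\<Sum>l\<in>UNIV. (pw v l)^2))
     - (\<beta>/2) * QQ z * (2 * t * VV v + t^3 * (VV v)^2))"
proof -
  have e: "(pw z l + 2*t*mw z v l + t^2 * pw v l)^2 = (pw z l)^2 + t * (4 * (pw z l * mw z v l))
      + t^2 * (4 * (mw z v l)^2 + 2 * pw z l * pw v l) + t^3 * (4 * (mw z v l * pw v l)) + t^4 * (pw v l)^2" for l
    by (simp add: power2_eq_square power3_eq_cube power4_eq_xxxx algebra_simps)
  have s: "(\<Sum>l\<in>UNIV. (pw z l + 2*t*mw z v l + t^2 * pw v l)^2) = QQ z + t * (4 * (\<Sum>l\<in>UNIV. pw z l * mw z v l))
      + t^2 * (\<Sum>l\<in>UNIV. 4 * (mw z v l)^2 + 2 * pw z l * pw v l) + t^3 * (4 * (\<Sum>l\<in>UNIV. mw z v l * pw v l))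
      + t^4 * (\<Sum>l\<in>UNIV. (pw v l)^2)"
    unfolding e QQ_def by (simp add: sum.distrib sum_distrib_left[symmetric])
  show ?thesis unfolding Pol_def s
    by (simp add: power2_eq_square power3_eq_cube power4_eq_xxxx algebra_simps)
qed

lemma descent1:
  assumes "z \<in> csphere" "inner_c a z = 0" "(\<Sum>l\<in>UNIV. mw z v l) = 0" "\<beta> > 0"
    and neg: "(\<Sum>l\<in>UNIV. pw z l * mw z v l) < 0"
  shows "\<not> local_min_on (fobj a \<beta>) csphere z"
proof -
  define P1 where "P1 = (\<Sum>l\<in>UNIV. pw z l * mw z v l)"
  define P2 where "P2 = (\<Sum>l\<in>UNIV. 4 * (mw z v l)^2 + 2 * pw z l * pw v l)"
  define P3 where "P3 = (\<Sum>l\<in>UNIV. mw z v l * pw v l)"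
  define P4 where "P4 = (\<Sum>l\<in>UNIV. (pw v l)^2)"
  define A where "A = (cmod (inner_c a v))^2"
  define R where "R t = (1/2) * t * A * (1 + t^2 * VV v)
     + (\<beta>/2) * (4 * P1 + t * P2 + 4 * t^2 * P3 + t^3 * P4)
     - (\<beta>/2) * QQ z * (2 * t * VV v + t^3 * (VV v)^2)" for t
  have PR: "Pol a \<beta> z v t = t * R t" for t
    unfolding Pol_expand R_def P1_def P2_def P3_def P4_def A_def by simp
  have "(R \<longlongrightarrow> R 0) (at_right 0)"
    unfolding R_def by (intro tendsto_intros)
  moreover have "R 0 < 0" unfolding R_def using neg assms(4) unfolding P1_def
    by (simp add: mult_pos_neg)
  ultimately have "eventually (\<lambda>t. R t < 0) (at_right 0)"
    by (rule order_tendstoD)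
  then have "eventually (\<lambda>t. Pol a \<beta> z v t < 0) (at_right 0)"
    using eventually_at_right_less[of "0::real"]
    by eventually_elim (simp add: PR mult_pos_neg)
  then show ?thesis using descent_general assms(1-3) by blast
qed

lemma descent2:
  assumes "z \<in> csphere" "inner_c a z = 0" "\<And>l. mw z v l = 0"
    and neg: "(1/2) * (cmod (inner_c a v))^2 + \<beta> * (\<Sum>l\<in>UNIV. pw z l * pw v l) - \<beta> * QQ z * VV v < 0"
  shows "\<not> local_min_on (fobj a \<beta>) csphere z"
proof -
  define P2 where "P2 = (\<Sum>l\<in>UNIV. pw z l * pw v l)"
  define P4 where "P4 = (\<Sum>l\<in>UNIV. (pw v l)^2)"
  define A where "A = (cmod (inner_c a v))^2"
  define R where "R t = (1/2) * A * (1 + t^2 * VV v)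
     + (\<beta>/2) * (2 * P2 + t^2 * P4)
     - (\<beta>/2) * QQ z * (2 * VV v + t^2 * (VV v)^2)" for t
  have PR: "Pol a \<beta> z v t = t^2 * R t" for t
    unfolding Pol_expand R_def P2_def P4_def A_def using assms(3)
    by (simp add: sum_distrib_left power2_eq_square power3_eq_cube algebra_simps)
  have "(R \<longlongrightarrow> R 0) (at_right 0)"
    unfolding R_def by (intro tendsto_intros)
  moreover have "R 0 < 0" unfolding R_def using neg unfolding P2_def A_def
    by simp
  ultimately have "eventually (\<lambda>t. R t < 0) (at_right 0)"
    by (rule order_tendstoD)
  then have "eventually (\<lambda>t. Pol a \<beta> z v t < 0) (at_right 0)"
    using eventually_at_right_less[of "0::real"]
    by eventually_elim (simp add: PR mult_pos_neg)
  moreover have "(\<Sum>l\<in>UNIV. mw z v l) = 0" using assms(3) by simp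
  ultimately show ?thesis using descent_general assms(1,2) by blast
qed

lemma sum_pw: "z \<in> csphere \<Longrightarrow> (\<Sum>l\<in>UNIV. pw z l) = 1"
  by (simp add: csphere_iff pw_def)

lemma QQ_lower:
  assumes "z \<in> csphere"
  shows "QQ (z::complex^'n) \<ge> 1 / CARD('n)"
  using sq_sum_bound[of "UNIV::'n set" "pw z"] sum_pw[OF assms] unfolding QQ_def by simp

lemma QQ_pos: "z \<in> csphere \<Longrightarrow> QQ (z::complex^'n) > 0"
  using QQ_lower[of z] by (smt (verit) divide_pos_pos of_nat_0_less_iff zero_less_card_finite)

lemma pw_zero_iff: "pw z l = 0 \<longleftrightarrow> z$l = 0" by (simp add: pw_def)

lemma re_cnj_scale: "Re (cnj x * (complex_of_real c * x)) = c * (cmod x)^2"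
  unfolding cmod_power2 by (simp add: algebra_simps power2_eq_square)

lemma kkt:
  fixes z :: "complex^'n"
  assumes sph: "z \<in> csphere" and az: "inner_c a z = 0" and b: "\<beta> > 0"
    and lm: "local_min_on (fobj a \<beta>) csphere z"
    and zi: "z$i \<noteq> 0" and zj: "z$j \<noteq> 0"
  shows "pw z i \<le> pw z j"
proof (rule ccontr)
  assume "\<not> pw z i \<le> pw z j"
  then have lt: "pw z j < pw z i" by simp
  then have ij: "i \<noteq> j" by auto
  have pj: "pw z j > 0" using zj by (simp add: pw_def)
  have pi: "pw z i > 0" using zi by (simp add: pw_def)
  define v where "v = (\<chi> l. if l = i then complex_of_real (- pw z j) * z$i
                          else if l = j then complex_of_real (pw z i) * z$j else 0)"
  have "mw z v i = Re (cnj (z$i) * (complex_of_real (- pw z j) * z$i))"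
    unfolding mw_def v_def by simp
  then have mi: "mw z v i = - pw z j * pw z i"
    by (simp only: re_cnj_scale pw_def)
  have "mw z v j = Re (cnj (z$j) * (complex_of_real (pw z i) * z$j))"
    unfolding mw_def v_def using ij by simp
  then have mj: "mw z v j = pw z i * pw z j"
    by (simp only: re_cnj_scale pw_def)
  have mo: "mw z v l = 0" if "l \<noteq> i" "l \<noteq> j" for l
    unfolding mw_def v_def using that by simp
  have "(\<Sum>l\<in>UNIV. mw z v l) = mw z v i + mw z v j"
    by (rule sum_two[OF ij]) (simp add: mo)
  then have s0: "(\<Sum>l\<in>UNIV. mw z v l) = 0" using mi mj by simp
  have "(\<Sum>l\<in>UNIV. pw z l * mw z v l) = pw z i * mw z v i + pw z j * mw z v j"
    by (rule sum_two[OF ij]) (simp add: mo)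
  also have "\<dots> = pw z i * pw z j * (pw z j - pw z i)" using mi mj by (simp add: algebra_simps)
  also have "\<dots> < 0" using pi pj lt by (simp add: mult_pos_neg)
  finally have "(\<Sum>l\<in>UNIV. pw z l * mw z v l) < 0" .
  then have "\<not> local_min_on (fobj a \<beta>) csphere z"
    using descent1[OF sph az s0 b] by blast
  then show False using lm by simp
qed

lemma outside_bound:
  fixes z :: "complex^'n"
  assumes sph: "z \<in> csphere" and az: "inner_c a z = 0"
    and lm: "local_min_on (fobj a \<beta>) csphere z"
    and zj: "z$j = 0"
  shows "(1/2) * (cmod (a$j))^2 \<ge> \<beta> * QQ z"
proof (rule ccontr)
  assume neg0: "\<not> ?thesis"
  define v :: "complex^'n" where "v = (\<chi> l. if l = j then 1 else 0)"
  have m0: "mw z v l = 0" for l unfolding mw_def v_def using zj by simp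
  have iv: "inner_c a v = cnj (a$j)"
    unfolding inner_c_def by (subst sum_one[of j]) (simp_all add: v_def)
  have V: "VV v = 1"
    unfolding VV_def by (subst sum_one[of j]) (simp_all add: v_def pw_def)
  have P: "(\<Sum>l\<in>UNIV. pw z l * pw v l) = 0"
    by (subst sum_one[of j]) (simp_all add: v_def pw_def zj)
  have "(1/2) * (cmod (inner_c a v))^2 + \<beta> * (\<Sum>l\<in>UNIV. pw z l * pw v l) - \<beta> * QQ z * VV v < 0"
    using neg0 unfolding iv V P by simp
  then have "\<not> local_min_on (fobj a \<beta>) csphere z"
    using descent2[OF sph az m0] by blast
  then show False using lm by simp
qed

lemma re_cnj_i: "Re (cnj x * (\<i> * x)) = 0"
  by (simp add: algebra_simps)

lemma rot_descent:
  fixes z :: "complex^'n"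
  assumes sph: "z \<in> csphere" and az: "inner_c a z = 0" and b: "\<beta> > 0"
    and zj: "z$j = 0" and zk: "z$k \<noteq> 0" and aj: "a$j \<noteq> 0" and ak: "a$k \<noteq> 0"
    and Qk: "QQ z = pw z k"
  shows "\<not> local_min_on (fobj a \<beta>) csphere z"
proof -
  have jk: "j \<noteq> k" using zj zk by auto
  define v where "v = (\<chi> l. if l = k then \<i> * z$k
                          else if l = j then - (cnj (a$k) * \<i> * z$k) / cnj (a$j) else 0)"
  have vo: "v$l = 0" if "l \<noteq> j" "l \<noteq> k" for l using that by (simp add: v_def)
  have vk: "v$k = \<i> * z$k" by (simp add: v_def)
  have vj: "v$j = - (cnj (a$k) * \<i> * z$k) / cnj (a$j)" using jk by (simp add: v_def)
  have m0: "mw z v l = 0" for l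
  proof -
    consider "l = k" | "l = j" | "l \<noteq> j \<and> l \<noteq> k" by blast
    then show ?thesis
      by cases (simp_all add: mw_def vk zj vo re_cnj_i)
  qed
  have "inner_c a v = cnj (a$j) * v$j + cnj (a$k) * v$k"
    unfolding inner_c_def by (rule sum_two[OF jk]) (simp add: vo)
  also have "\<dots> = 0" unfolding vj vk using aj by (simp add: field_simps)
  finally have iv: "inner_c a v = 0" .
  have pk: "pw z k > 0" using zk by (simp add: pw_def)
  have qk: "pw v k = pw z k" by (simp add: pw_def vk norm_mult)
  have qj: "pw v j > 0" using ak aj zk by (simp add: pw_def vj norm_mult norm_divide)
  have V: "VV v = pw v j + pw v k"
    unfolding VV_def by (rule sum_two[OF jk]) (simp add: vo pw_def)
  have "(\<Sum>l\<in>UNIV. pw z l * pw v l) = pw z j * pw v j + pw z k * pw v k"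
    by (rule sum_two[OF jk]) (simp add: vo pw_def)
  then have P: "(\<Sum>l\<in>UNIV. pw z l * pw v l) = pw z k * pw z k"
    using zj qk by (simp add: pw_def)
  have "(1/2) * (cmod (inner_c a v))^2 + \<beta> * (\<Sum>l\<in>UNIV. pw z l * pw v l) - \<beta> * QQ z * VV v
        = - \<beta> * pw z k * pw v j"
    unfolding iv P V Qk qk by (simp add: algebra_simps)
  also have "\<dots> < 0" using b pk qj by (simp add: mult_pos_pos)
  finally show ?thesis using descent2[OF sph az m0] by blast
qed

lemma two_out:
  fixes z :: "complex^'n"
  assumes sph: "z \<in> csphere" and az: "inner_c a z = 0" and b: "\<beta> > 0"
    and zj: "z$j = 0" and zj': "z$j' = 0" and jj: "j \<noteq> j'" and aj: "a$j \<noteq> 0"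
  shows "\<not> local_min_on (fobj a \<beta>) csphere z"
proof -
  define v where "v = (\<chi> l. if l = j then cnj (a$j') else if l = j' then - cnj (a$j) else 0)"
  have vo: "v$l = 0" if "l \<noteq> j" "l \<noteq> j'" for l using that by (simp add: v_def)
  have vj: "v$j = cnj (a$j')" by (simp add: v_def)
  have vj': "v$j' = - cnj (a$j)" using jj by (simp add: v_def)
  have m0: "mw z v l = 0" for l
  proof -
    consider "l = j" | "l = j'" | "l \<noteq> j \<and> l \<noteq> j'" by blast
    then show ?thesis
      by cases (simp_all add: mw_def zj zj' vo)
  qed
  have "inner_c a v = cnj (a$j) * v$j + cnj (a$j') * v$j'"
    unfolding inner_c_def by (rule sum_two[OF jj]) (simp add: vo)
  also have "\<dots> = 0" unfolding vj vj' by simp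
  finally have iv: "inner_c a v = 0" .
  have V: "VV v = pw v j + pw v j'"
    unfolding VV_def by (rule sum_two[OF jj]) (simp add: vo pw_def)
  have qj': "pw v j' > 0" using aj by (simp add: pw_def vj')
  have Vp: "VV v > 0" using V qj' pw_nonneg[of v j] by simp
  have P: "(\<Sum>l\<in>UNIV. pw z l * pw v l) = 0"
    using sum_two[OF jj, of "\<lambda>l. pw z l * pw v l"] by (simp add: vo pw_def zj zj')
  have "(1/2) * (cmod (inner_c a v))^2 + \<beta> * (\<Sum>l\<in>UNIV. pw z l * pw v l) - \<beta> * QQ z * VV v
        = - \<beta> * QQ z * VV v"
    unfolding iv P by simp
  also have "\<dots> < 0" using b QQ_pos[OF sph] Vp by (simp add: mult_pos_pos)
  finally show ?thesis using descent2[OF sph az m0] by blast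
qed

lemma structure_lm:
  fixes z :: "complex^'n"
  assumes N2: "CARD('n) \<ge> 2"
    and sph: "z \<in> csphere" and az: "inner_c a z = 0" and b: "\<beta> > 0"
    and lm: "local_min_on (fobj a \<beta>) csphere z"
  shows "(\<forall>k. z$k \<noteq> 0 \<and> pw z k = 1 / CARD('n)) \<or>
         (\<exists>j. z$j = 0 \<and> a$j \<noteq> 0 \<and> (\<forall>k. k \<noteq> j \<longrightarrow> z$k \<noteq> 0 \<and> pw z k = 1 / (real CARD('n) - 1) \<and> a$k = 0)
              \<and> (1/2) * (cmod (a$j))^2 \<ge> \<beta> / (real CARD('n) - 1))"
proof -
  have eq: "pw z i = pw z j" if "z$i \<noteq> 0" "z$j \<noteq> 0" for i j
    using kkt[OF sph az b lm that] kkt[OF sph az b lm that(2,1)] by simp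
  have s1: "(\<Sum>l\<in>UNIV. pw z l) = 1" using sum_pw[OF sph] .
  obtain k0 where k0: "z$k0 \<noteq> 0"
    using s1 by (metis (no_types, lifting) pw_zero_iff sum.neutral zero_neq_one)
  define c where "c = pw z k0"
  have pc: "pw z l = (if z$l = 0 then 0 else c)" for l
    using eq[OF _ k0] by (simp add: c_def pw_zero_iff)
  have Qc: "QQ z = c"
  proof -
    have "QQ z = (\<Sum>l\<in>UNIV. c * pw z l)"
      unfolding QQ_def by (rule sum.cong) (simp_all add: pc power2_eq_square)
    also have "\<dots> = c" using s1 by (simp add: sum_distrib_left[symmetric])
    finally show ?thesis .
  qed
  show ?thesis
  proof (cases "\<forall>k. z$k \<noteq> 0")
    case True
    then have "(\<Sum>l\<in>UNIV. pw z l) = (\<Sum>l\<in>(UNIV::'n set). c)"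
      by (intro sum.cong) (simp_all add: pc)
    then have "real CARD('n) * c = 1" using s1 by simp
    then have "c = 1 / CARD('n)" by (simp add: field_simps)
    then show ?thesis using True pc by simp
  next
    case False
    then obtain j where zj: "z$j = 0" by blast
    have ob: "(1/2) * (cmod (a$j))^2 \<ge> \<beta> * QQ z" using outside_bound[OF sph az lm zj] .
    have "\<beta> * QQ z > 0" using b QQ_pos[OF sph] by simp
    then have aj: "a$j \<noteq> 0" using ob by auto
    have nz: "z$k \<noteq> 0" if "k \<noteq> j" for k
      using two_out[OF sph az b zj _ _ aj, of k] that lm by auto
    have "(\<Sum>l\<in>UNIV. pw z l) = pw z j + (\<Sum>l\<in>UNIV-{j}. pw z l)"
      by (rule sum.remove) auto
    also have "(\<Sum>l\<in>UNIV-{j}. pw z l) = (\<Sum>l\<in>UNIV-{j}. c)"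
      by (intro sum.cong) (simp_all add: pc nz)
    finally have "(real CARD('n) - 1) * c = 1" using s1 zj N2
      by (simp add: pw_def card_Diff_singleton of_nat_diff)
    then have cN: "c = 1 / (real CARD('n) - 1)" using N2 by (simp add: field_simps)
    have ak: "a$k = 0" if "k \<noteq> j" for k
    proof (rule ccontr)
      assume "a$k \<noteq> 0"
      moreover have "QQ z = pw z k" using Qc pc nz[OF that] by simp
      ultimately have "\<not> local_min_on (fobj a \<beta>) csphere z"
        using rot_descent[OF sph az b zj nz[OF that] aj] by blast
      then show False using lm by simp
    qed
    have ob2: "(1/2) * (cmod (a$j))^2 \<ge> \<beta> / (real CARD('n) - 1)"
      using ob Qc cN by simp
    show ?thesis
      using zj aj nz ak pc cN ob2 by (intro disjI2 exI[of _ j]) auto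
  qed
qed



lemma polygon:
  fixes r :: "'n::finite \<Rightarrow> real"
  assumes nn: "\<And>k. r k \<ge> 0" and half: "\<And>k. 2 * r k \<le> (\<Sum>l\<in>UNIV. r l)"
  shows "\<exists>u. (\<forall>k. cmod (u k) = 1) \<and> (\<Sum>k\<in>UNIV. complex_of_real (r k) * u k) = 0"
proof -
  define S where "S = (\<Sum>l\<in>UNIV. r l)"
  have S0: "S \<ge> 0" unfolding S_def by (simp add: sum_nonneg nn)
  define F where "F = {B::'n set. (\<Sum>l\<in>B. r l) \<le> S / 2}"
  have finF: "finite F" unfolding F_def by simp
  have eF: "{} \<in> F" unfolding F_def using S0 by simp
  define m where "m = Max (card ` F)"
  have "m \<in> card ` F" unfolding m_def using finF eF by (intro Max_in) auto
  then obtain A where AF: "A \<in> F" and cA: "card A = m" by blast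
  have maxA: "card B \<le> card A" if "B \<in> F" for B
    unfolding cA m_def using finF that by (intro Max_ge) auto
  show ?thesis
  proof (cases "A = UNIV")
    case True
    then have "S \<le> S / 2" using AF unfolding F_def S_def by simp
    then have "S = 0" using S0 by simp
    then have r0: "r k = 0" for k
      using sum_nonneg_eq_0_iff[of UNIV r] nn unfolding S_def by auto
    show ?thesis by (rule exI[of _ "\<lambda>_. 1"]) (simp add: r0)
  next
    case False
    then obtain j where jA: "j \<notin> A" by blast
    define x where "x = (\<Sum>l\<in>A. r l)"
    define y where "y = r j"
    define C where "C = UNIV - insert j A"
    define w where "w = (\<Sum>l\<in>C. r l)"
    have "card (insert j A) > card A" using jA by (simp add: card_insert_if)
    then have "insert j A \<notin> F" using maxA by fastforce
    then have big: "x + y > S / 2" unfolding F_def x_def y_def using jA by simp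
    have xS: "x \<le> S / 2" using AF unfolding F_def x_def by simp
    have yS: "y \<le> S / 2" using half[of j] unfolding y_def S_def by simp
    have Ssplit: "S = w + (y + x)"
      unfolding S_def w_def C_def x_def y_def
      using sum.subset_diff[of "insert j A" UNIV r] jA by simp
    have x0: "x \<ge> 0" unfolding x_def by (simp add: sum_nonneg nn)
    have y0: "y \<ge> 0" unfolding y_def by (simp add: nn)
    have w0: "w \<ge> 0" unfolding w_def by (simp add: sum_nonneg nn)
    define g where "g \<theta> = cmod (complex_of_real x + complex_of_real y * cis \<theta>)" for \<theta>
    have g0: "g 0 = x + y" unfolding g_def using x0 y0 by (simp flip: of_real_add)
    have gpi: "g pi = \<bar>x - y\<bar>" unfolding g_def by (simp flip: of_real_diff)
    have cont: "continuous_on {0..pi} g" unfolding g_def by (intro continuous_intros)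
    have "g pi \<le> w" unfolding gpi using Ssplit xS yS by auto
    moreover have "w \<le> g 0" unfolding g0 using Ssplit big by simp
    ultimately obtain \<theta> where th: "g \<theta> = w"
      using IVT2'[where f=g and a=0 and b=pi and y=w, OF _ _ _ cont] by (auto simp: pi_ge_zero)
    define c where "c = complex_of_real x + complex_of_real y * cis \<theta>"
    have cw: "cmod c = w" using th unfolding g_def c_def by simp
    define t where "t = (if w = 0 then 1 else - c / complex_of_real w)"
    have t1: "cmod t = 1" unfolding t_def using cw w0 by (simp add: norm_divide)
    have ct: "c + complex_of_real w * t = 0" unfolding t_def using cw by auto
    define u where "u k = (if k \<in> A then 1 else if k = j then cis \<theta> else t)" for k
    have u1: "cmod (u k) = 1" for k unfolding u_def using t1 by simp
    define f where "f k = complex_of_real (r k) * u k" for k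
    have "(\<Sum>k\<in>UNIV. f k) = (\<Sum>k\<in>C. f k) + (\<Sum>k\<in>insert j A. f k)"
      unfolding C_def using sum.subset_diff[of "insert j A" UNIV f] by simp
    also have "(\<Sum>k\<in>insert j A. f k) = f j + (\<Sum>k\<in>A. f k)" using jA by simp
    also have "(\<Sum>k\<in>A. f k) = complex_of_real x"
      unfolding x_def f_def u_def by (simp add: of_real_sum)
    also have "f j = complex_of_real y * cis \<theta>" unfolding f_def u_def y_def using jA by simp
    also have "(\<Sum>k\<in>C. f k) = complex_of_real w * t"
      unfolding w_def f_def u_def C_def by (simp add: of_real_sum sum_distrib_right)
    finally have "(\<Sum>k\<in>UNIV. f k) = c + complex_of_real w * t" unfolding c_def by simp
    then have "(\<Sum>k\<in>UNIV. f k) = 0" using ct by simp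
    then show ?thesis using u1 unfolding f_def by blast
  qed
qed



lemma global_local: "global_min_on f S z \<Longrightarrow> local_min_on f S z"
  unfolding global_min_on_def local_min_on_def by (auto intro: exI[of _ 1])

lemma fobj_eq: "fobj a \<beta> w = (1/2) * (cmod (inner_c a w))^2 + (\<beta>/2) * QQ w"
  by (simp add: fobj_def QQ_norm4)

lemma lower_general:
  fixes w :: "complex^'n"
  assumes "w \<in> csphere" "\<beta> > 0"
  shows "fobj a \<beta> w \<ge> (1/2) * (cmod (inner_c a w))^2 + \<beta> / (2 * CARD('n))"
proof -
  have "(\<beta>/2) * QQ w \<ge> (\<beta>/2) * (1 / CARD('n))"
    using QQ_lower[OF assms(1)] assms(2) by (intro mult_left_mono) auto
  then show ?thesis unfolding fobj_eq by simp
qed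

lemma sgn_fix: "cnj x * (if x = 0 then 1 else sgn x) = complex_of_real (cmod x)"
  "cmod (if x = 0 then 1 else sgn x) = 1"
proof -
  show "cnj x * (if x = 0 then 1 else sgn x) = complex_of_real (cmod x)"
  proof (cases "x = 0")
    case False
    have "cnj x * sgn x = cnj x * x / complex_of_real (cmod x)"
      by (simp add: sgn_div_norm scaleR_conv_of_real divide_inverse mult.commute mult.left_commute)
    also have "\<dots> = complex_of_real (cmod x)"
      using False by (simp add: cnj_mult_self power2_eq_square)
    finally show ?thesis using False by simp
  qed simp
  show "cmod (if x = 0 then 1 else sgn x) = 1" by (simp add: norm_sgn)
qed

lemma C1_point:
  fixes a :: "complex^'n"
  assumes C1: "norminf a \<le> norm1 a / 2"
  shows "\<exists>z. z \<in> csphere \<and> inner_c a z = 0 \<and> (\<forall>k. pw z k = 1 / CARD('n))"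
proof -
  have half: "2 * cmod (a$k) \<le> (\<Sum>l\<in>UNIV. cmod (a$l))" for k
  proof -
    have "cmod (a$k) \<le> norminf a" unfolding norminf_def by (rule Max_ge) auto
    then show ?thesis using C1 unfolding norm1_def by simp
  qed
  obtain u where u1: "\<forall>k. cmod (u k) = 1" and us: "(\<Sum>k\<in>UNIV. complex_of_real (cmod (a$k)) * u k) = 0"
    using polygon[of "\<lambda>k. cmod (a$k)"] half by auto
  define e where "e k = (if a$k = 0 then 1 else sgn (a$k))" for k
  define \<rho> where "\<rho> = 1 / sqrt (real CARD('n))"
  have \<rho>0: "\<rho> > 0" unfolding \<rho>_def by simp
  define z where "z = (\<chi> k. complex_of_real \<rho> * (e k * u k))"
  have pz: "pw z k = 1 / CARD('n)" for k
    unfolding pw_def z_def e_def using u1 sgn_fix(2)[of "a$k"] \<rho>0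
    by (simp add: norm_mult norm_divide norm_sgn \<rho>_def power_divide)
  have "inner_c a z = complex_of_real \<rho> * (\<Sum>k\<in>UNIV. (cnj (a$k) * e k) * u k)"
    unfolding inner_c_def z_def by (simp add: sum_distrib_left algebra_simps)
  also have "(\<Sum>k\<in>UNIV. (cnj (a$k) * e k) * u k) = 0"
    unfolding e_def sgn_fix(1) using us .
  finally have iz: "inner_c a z = 0" by simp
  have "z \<in> csphere" unfolding csphere_iff using pz unfolding pw_def by simp
  then show ?thesis using iz pz by blast
qed

lemma C2_lower:
  fixes a w :: "complex^'n"
  assumes N2: "CARD('n) \<ge> 2" and b: "\<beta> > 0" and sph: "w \<in> csphere"
    and az: "\<And>k. k \<noteq> j \<Longrightarrow> a$k = 0" and aj: "(cmod (a$j))^2 \<ge> 2 * \<beta> / (real CARD('n) - 1)"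
  shows "fobj a \<beta> w \<ge> \<beta> / (2 * (real CARD('n) - 1)) + (\<beta>/2) * (pw w j)^2"
proof -
  define M where "M = real CARD('n) - 1"
  have M1: "M \<ge> 1" unfolding M_def using N2 by simp
  define p where "p = pw w j"
  have p0: "p \<ge> 0" unfolding p_def by (rule pw_nonneg)
  have iw: "inner_c a w = cnj (a$j) * w$j"
    unfolding inner_c_def by (rule sum_one) (simp add: az)
  have I2: "(cmod (inner_c a w))^2 = (cmod (a$j))^2 * p"
    unfolding iw p_def pw_def by (simp add: norm_mult power_mult_distrib)
  have s1: "p + (\<Sum>l\<in>UNIV-{j}. pw w l) = 1"
    using sum_pw[OF sph] sum.remove[of UNIV j "pw w"] unfolding p_def by simp
  have cardM: "real (card (UNIV - {j} :: 'n set)) = M"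
    unfolding M_def using N2 by (simp add: card_Diff_singleton of_nat_diff)
  have "(\<Sum>l\<in>UNIV-{j}. pw w l)^2 / M \<le> (\<Sum>l\<in>UNIV-{j}. (pw w l)^2)"
    using sq_sum_bound[of "UNIV - {j}" "pw w"] cardM M1 by simp
  moreover have "(\<Sum>l\<in>UNIV-{j}. pw w l) = 1 - p" using s1 by simp
  ultimately have "(1 - p)^2 / M \<le> (\<Sum>l\<in>UNIV-{j}. (pw w l)^2)" by simp
  moreover have "QQ w = p^2 + (\<Sum>l\<in>UNIV-{j}. (pw w l)^2)"
    unfolding QQ_def p_def using sum.remove[of UNIV j "\<lambda>l. (pw w l)^2"] by simp
  ultimately have Qb: "QQ w \<ge> p^2 + (1 - p)^2 / M" by simp
  have Ab0: "(1/2) * (cmod (a$j))^2 * p \<ge> (\<beta> / M) * p"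
    using aj p0 unfolding M_def by (intro mult_right_mono) (auto simp: mult.commute)
  then have Ab: "(1/2) * ((cmod (a$j))^2 * p) \<ge> (\<beta> / M) * p" by (simp add: mult.assoc)
  have "fobj a \<beta> w \<ge> (\<beta> / M) * p + (\<beta>/2) * (p^2 + (1 - p)^2 / M)"
  proof -
    have "(\<beta>/2) * (p^2 + (1 - p)^2 / M) \<le> (\<beta>/2) * QQ w"
      using Qb b by (intro mult_left_mono) auto
    then show ?thesis unfolding fobj_eq I2 using Ab by linarith
  qed
  also have "(\<beta> / M) * p + (\<beta>/2) * (p^2 + (1 - p)^2 / M) = \<beta> / (2 * M) + (\<beta>/2) * p^2 + \<beta> * p^2 / (2 * M)"
    using M1 by (simp add: field_simps power2_eq_square)
  finally show ?thesis unfolding M_def[symmetric] p_def[symmetric]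
    using b M1 by (smt (verit) divide_nonneg_pos zero_le_power2 mult_nonneg_nonneg)
qed

lemma C2_point:
  fixes a :: "complex^'n"
  assumes N2: "CARD('n) \<ge> 2" and az: "\<And>k. k \<noteq> j \<Longrightarrow> a$k = 0"
  shows "\<exists>z. z \<in> csphere \<and> inner_c a z = 0 \<and> fobj a \<beta> z = \<beta> / (2 * (real CARD('n) - 1))"
proof -
  define M where "M = real CARD('n) - 1"
  have M1: "M \<ge> 1" unfolding M_def using N2 by simp
  have cardM: "real (card (UNIV - {j} :: 'n set)) = M"
    unfolding M_def using N2 by (simp add: card_Diff_singleton of_nat_diff)
  define z :: "complex^'n" where "z = (\<chi> k. if k = j then 0 else complex_of_real (1 / sqrt M))"
  have pz: "pw z k = (if k = j then 0 else 1 / M)" for k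
    unfolding pw_def z_def using M1 by (simp add: norm_divide power_divide)
  have "(\<Sum>l\<in>UNIV. pw z l) = pw z j + (\<Sum>l\<in>UNIV-{j}. pw z l)"
    by (rule sum.remove) auto
  also have "(\<Sum>l\<in>UNIV-{j}. pw z l) = (\<Sum>l\<in>UNIV-{j}. 1 / M)"
    by (rule sum.cong) (simp_all add: pz)
  finally have "(\<Sum>l\<in>UNIV. pw z l) = 1" using cardM M1 by (simp add: pz)
  then have sph: "z \<in> csphere" by (simp add: csphere_iff pw_def)
  have iz: "inner_c a z = 0"
    unfolding inner_c_def by (rule sum.neutral) (simp add: z_def az)
  have "QQ z = (pw z j)^2 + (\<Sum>l\<in>UNIV-{j}. (pw z l)^2)"
    unfolding QQ_def using sum.remove[of UNIV j "\<lambda>l. (pw z l)^2"] by simp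
  also have "(\<Sum>l\<in>UNIV-{j}. (pw z l)^2) = (\<Sum>l\<in>UNIV-{j}. (1 / M)^2)"
    by (rule sum.cong) (simp_all add: pz)
  finally have "QQ z = 1 / M" using cardM M1 by (simp add: pz power2_eq_square)
  then have "fobj a \<beta> z = \<beta> / (2 * M)" unfolding fobj_eq iz by simp
  then show ?thesis using sph iz unfolding M_def by blast
qed



lemma pw_QQ_const:
  assumes "\<And>l. pw z l = 0 \<or> pw z l = c" "z \<in> csphere"
  shows "QQ z = c"
proof -
  have "QQ z = (\<Sum>l\<in>UNIV. c * pw z l)"
    unfolding QQ_def by (rule sum.cong) (use assms(1) in \<open>auto simp: power2_eq_square\<close>)
  also have "\<dots> = c" using sum_pw[OF assms(2)] by (simp add: sum_distrib_left[symmetric])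
  finally show ?thesis .
qed

theorem theorem9:
  fixes a :: "complex ^ 'n" and \<beta> :: real
  assumes "CARD('n) \<ge> 2" and "\<beta> > 0"
  defines "cond \<equiv> norminf a \<le> norm1 a / 2
              \<or> (card {k. a $ k \<noteq> 0} = 1 \<and> norm a ^ 2 \<ge> 2 * \<beta> / (real CARD('n) - 1))"
  shows "((\<exists>z. local_min_on (fobj a \<beta>) csphere z \<and> inner_c a z = 0) \<longleftrightarrow> cond)
         \<and> (cond \<longrightarrow> (\<forall>z. (local_min_on (fobj a \<beta>) csphere z \<and> inner_c a z = 0)
                         \<longleftrightarrow> global_min_on (fobj a \<beta>) csphere z))"
proof -
  note N2 = assms(1) and b = assms(2)
  define N where "N = real CARD('n)"
  have N2r: "N \<ge> 2" unfolding N_def using N2 by simp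
  have glob1: "\<beta> / (2 * real CARD('n)) \<le> fobj a \<beta> w" if "w \<in> csphere" for w
  proof -
    have "fobj a \<beta> w \<ge> (1/2) * (cmod (inner_c a w))^2 + \<beta> / (2 * real CARD('n))"
      using lower_general[OF that b, of a] by simp
    moreover have "(1/2) * (cmod (inner_c a w))^2 \<ge> 0" by simp
    ultimately show ?thesis by linarith
  qed
  have glob2: "\<beta> / (2 * (real CARD('n) - 1)) \<le> fobj a \<beta> w"
    if ak: "\<And>k. k \<noteq> j \<Longrightarrow> a$k = 0" and ab: "(cmod (a$j))^2 \<ge> 2 * \<beta> / (real CARD('n) - 1)"
      and w: "w \<in> csphere" for w j
  proof -
    have "fobj a \<beta> w \<ge> \<beta> / (2 * (real CARD('n) - 1)) + (\<beta>/2) * (pw w j)^2"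
      by (rule C2_lower[OF N2 b w ak ab])
    moreover have "(\<beta>/2) * (pw w j)^2 \<ge> 0" using b by simp
    ultimately show ?thesis by linarith
  qed
  have C2_iff: "(card {k. a $ k \<noteq> 0} = 1 \<and> norm a ^ 2 \<ge> 2 * \<beta> / (N - 1)) \<longleftrightarrow>
      (\<exists>j. a$j \<noteq> 0 \<and> (\<forall>k. k \<noteq> j \<longrightarrow> a$k = 0) \<and> (cmod (a$j))^2 \<ge> 2 * \<beta> / (N - 1))"
  proof
    assume h: "card {k. a $ k \<noteq> 0} = 1 \<and> norm a ^ 2 \<ge> 2 * \<beta> / (N - 1)"
    then obtain j where j: "{k. a $ k \<noteq> 0} = {j}" by (auto simp: card_Suc_eq)
    then have aj: "a$j \<noteq> 0" and ak: "\<forall>k. k \<noteq> j \<longrightarrow> a$k = 0" by auto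
    have "norm a ^ 2 = (cmod (a$j))^2"
      unfolding norm_sq_vec by (rule sum_one) (simp add: ak)
    then show "\<exists>j. a$j \<noteq> 0 \<and> (\<forall>k. k \<noteq> j \<longrightarrow> a$k = 0) \<and> (cmod (a$j))^2 \<ge> 2 * \<beta> / (N - 1)"
      using aj ak h by auto
  next
    assume "\<exists>j. a$j \<noteq> 0 \<and> (\<forall>k. k \<noteq> j \<longrightarrow> a$k = 0) \<and> (cmod (a$j))^2 \<ge> 2 * \<beta> / (N - 1)"
    then obtain j where aj: "a$j \<noteq> 0" and ak: "\<forall>k. k \<noteq> j \<longrightarrow> a$k = 0"
      and ab: "(cmod (a$j))^2 \<ge> 2 * \<beta> / (N - 1)" by blast
    have "{k. a $ k \<noteq> 0} = {j}" using aj ak by auto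
    moreover have "norm a ^ 2 = (cmod (a$j))^2"
      unfolding norm_sq_vec by (rule sum_one) (simp add: ak)
    ultimately show "card {k. a $ k \<noteq> 0} = 1 \<and> norm a ^ 2 \<ge> 2 * \<beta> / (N - 1)"
      using ab by simp
  qed
  have key: "global_min_on (fobj a \<beta>) csphere z \<and> cond"
    if lm: "local_min_on (fobj a \<beta>) csphere z" and az: "inner_c a z = 0" for z
  proof -
    have sph: "z \<in> csphere" using lm unfolding local_min_on_def by blast
    from structure_lm[OF N2 sph az b lm]
    show ?thesis
    proof
      assume all: "\<forall>k. z$k \<noteq> 0 \<and> pw z k = 1 / CARD('n)"
      have Q: "QQ z = 1 / N" unfolding N_def using pw_QQ_const[OF _ sph, of "1 / CARD('n)"] all by auto
      have fz: "fobj a \<beta> z = \<beta> / (2 * N)" unfolding fobj_eq az Q by simp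
      have glob: "global_min_on (fobj a \<beta>) csphere z"
        unfolding global_min_on_def using sph fz unfolding N_def by (auto intro: glob1)
      have N0: "N > 0" using N2r by simp
      define \<rho> where "\<rho> = 1 / sqrt N"
      have \<rho>0: "\<rho> > 0" unfolding \<rho>_def using N0 by simp
      have cz: "cmod (z$k) = \<rho>" for k
      proof -
        have "(cmod (z$k))^2 = 1 / N" using all unfolding pw_def N_def by simp
        then have "cmod (z$k) = sqrt (1 / N)" by (metis norm_ge_zero real_sqrt_unique)
        then show ?thesis unfolding \<rho>_def by (simp add: real_sqrt_divide)
      qed
      have half: "2 * cmod (a$k) \<le> norm1 a" for k
      proof -
        have "0 = inner_c a z" using az by simp
        also have "inner_c a z = cnj (a$k) * z$k + (\<Sum>l\<in>UNIV-{k}. cnj (a$l) * z$l)"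
          unfolding inner_c_def by (rule sum.remove) auto
        finally have e: "cnj (a$k) * z$k = - (\<Sum>l\<in>UNIV-{k}. cnj (a$l) * z$l)" by (simp add: eq_neg_iff_add_eq_0)
        have "cmod (a$k) * \<rho> = cmod (cnj (a$k) * z$k)" by (simp add: norm_mult cz)
        also have "\<dots> \<le> (\<Sum>l\<in>UNIV-{k}. cmod (cnj (a$l) * z$l))" unfolding e norm_minus_cancel
          by (rule norm_sum)
        also have "\<dots> = (\<Sum>l\<in>UNIV-{k}. cmod (a$l)) * \<rho>"
          by (simp add: norm_mult cz sum_distrib_right)
        finally have "cmod (a$k) \<le> (\<Sum>l\<in>UNIV-{k}. cmod (a$l))" using \<rho>0 by simp
        moreover have "norm1 a = cmod (a$k) + (\<Sum>l\<in>UNIV-{k}. cmod (a$l))"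
          unfolding norm1_def by (rule sum.remove) auto
        ultimately show ?thesis by simp
      qed
      have half': "cmod (a$k) \<le> norm1 a / 2" for k using half[of k] by simp
      have "norminf a \<le> norm1 a / 2" unfolding norminf_def using half'
        by (subst Max_le_iff) auto
      then show ?thesis using glob unfolding cond_def by simp
    next
      assume "\<exists>j. z$j = 0 \<and> a$j \<noteq> 0 \<and> (\<forall>k. k \<noteq> j \<longrightarrow> z$k \<noteq> 0 \<and> pw z k = 1 / (real CARD('n) - 1) \<and> a$k = 0)
              \<and> (1/2) * (cmod (a$j))^2 \<ge> \<beta> / (real CARD('n) - 1)"
      then obtain j where zj: "z$j = 0" and aj: "a$j \<noteq> 0"
        and rest: "\<forall>k. k \<noteq> j \<longrightarrow> z$k \<noteq> 0 \<and> pw z k = 1 / (N - 1) \<and> a$k = 0"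
        and ab: "(1/2) * (cmod (a$j))^2 \<ge> \<beta> / (N - 1)" unfolding N_def by blast
      have ak: "\<And>k. k \<noteq> j \<Longrightarrow> a$k = 0" using rest by blast
      have ab2: "(cmod (a$j))^2 \<ge> 2 * \<beta> / (N - 1)" using ab by (simp add: mult.commute)
      have "pw z l = 0 \<or> pw z l = 1 / (N - 1)" for l
        using rest zj by (cases "l = j") (auto simp: pw_def)
      then have Q: "QQ z = 1 / (N - 1)" using pw_QQ_const[OF _ sph] by blast
      have fz: "fobj a \<beta> z = \<beta> / (2 * (N - 1))" unfolding fobj_eq az Q by simp
      have glob: "global_min_on (fobj a \<beta>) csphere z"
        unfolding global_min_on_def
      proof (intro conjI ballI sph)
        fix w :: "complex^'n" assume "w \<in> csphere"
        then show "fobj a \<beta> z \<le> fobj a \<beta> w"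
          using glob2[OF ak ab2[unfolded N_def]] fz unfolding N_def by simp
      qed
      have "cond" unfolding cond_def N_def[symmetric] C2_iff using aj ak ab2 by blast
      then show ?thesis using glob by simp
    qed
  qed
  have conv: "local_min_on (fobj a \<beta>) csphere z \<and> inner_c a z = 0"
    if c: cond and g: "global_min_on (fobj a \<beta>) csphere z" for z
  proof -
    have sph: "z \<in> csphere" and gm: "\<forall>w\<in>csphere. fobj a \<beta> z \<le> fobj a \<beta> w"
      using g unfolding global_min_on_def by auto
    have "inner_c a z = 0"
      using c unfolding cond_def N_def[symmetric] C2_iff
    proof
      assume "norminf a \<le> norm1 a / 2"
      then obtain z0 where z0: "z0 \<in> csphere" "inner_c a z0 = 0" "\<forall>k. pw z0 k = 1 / CARD('n)"
        using C1_point by blast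
      have "QQ z0 = 1 / CARD('n)" using pw_QQ_const[OF _ z0(1)] z0(3) by blast
      then have "fobj a \<beta> z0 = \<beta> / (2 * CARD('n))" unfolding fobj_eq z0(2) by simp
      then have "fobj a \<beta> z \<le> \<beta> / (2 * CARD('n))" using gm z0(1) by metis
      then have "(cmod (inner_c a z))^2 \<le> 0" using lower_general[OF sph b, of a] by linarith
      then show ?thesis by simp
    next
      assume "\<exists>j. a$j \<noteq> 0 \<and> (\<forall>k. k \<noteq> j \<longrightarrow> a$k = 0) \<and> (cmod (a$j))^2 \<ge> 2 * \<beta> / (N - 1)"
      then obtain j where aj: "a$j \<noteq> 0" and ak: "\<And>k. k \<noteq> j \<Longrightarrow> a$k = 0"
        and ab: "(cmod (a$j))^2 \<ge> 2 * \<beta> / (N - 1)" by blast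
      obtain z1 where z1: "z1 \<in> csphere" "inner_c a z1 = 0" "fobj a \<beta> z1 = \<beta> / (2 * (N - 1))"
        using C2_point[OF N2 ak, where \<beta>=\<beta>] unfolding N_def by blast
      have "fobj a \<beta> z \<le> \<beta> / (2 * (N - 1))" using gm z1 by metis
      moreover have "fobj a \<beta> z \<ge> \<beta> / (2 * (real CARD('n) - 1)) + (\<beta>/2) * (pw z j)^2"
        by (rule C2_lower[OF N2 b sph ak ab[unfolded N_def]])
      ultimately have "(\<beta>/2) * (pw z j)^2 \<le> 0" unfolding N_def by linarith
      then have "pw z j = 0" using b by (simp add: mult_le_0_iff)
      then have zj: "z$j = 0" by (simp add: pw_zero_iff)
      show ?thesis unfolding inner_c_def by (rule sum.neutral) (metis zj ak mult_zero_right complex_cnj_zero mult_zero_left)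
    qed
    then show ?thesis using global_local[OF g] by simp
  qed
  have ex: "\<exists>z. local_min_on (fobj a \<beta>) csphere z \<and> inner_c a z = 0" if c: cond
  proof -
    have "\<exists>z. global_min_on (fobj a \<beta>) csphere z"
      using c unfolding cond_def N_def[symmetric] C2_iff
    proof
      assume "norminf a \<le> norm1 a / 2"
      then obtain z0 where z0: "z0 \<in> csphere" "inner_c a z0 = 0" "\<forall>k. pw z0 k = 1 / CARD('n)"
        using C1_point by blast
      have "QQ z0 = 1 / CARD('n)" using pw_QQ_const[OF _ z0(1)] z0(3) by blast
      then have "fobj a \<beta> z0 = \<beta> / (2 * CARD('n))" unfolding fobj_eq z0(2) by simp
      then have "global_min_on (fobj a \<beta>) csphere z0"
        unfolding global_min_on_def using z0(1) by (auto intro: glob1)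
      then show ?thesis by blast
    next
      assume "\<exists>j. a$j \<noteq> 0 \<and> (\<forall>k. k \<noteq> j \<longrightarrow> a$k = 0) \<and> (cmod (a$j))^2 \<ge> 2 * \<beta> / (N - 1)"
      then obtain j where aj: "a$j \<noteq> 0" and ak: "\<And>k. k \<noteq> j \<Longrightarrow> a$k = 0"
        and ab: "(cmod (a$j))^2 \<ge> 2 * \<beta> / (N - 1)" by blast
      obtain z1 where z1: "z1 \<in> csphere" "inner_c a z1 = 0" "fobj a \<beta> z1 = \<beta> / (2 * (N - 1))"
        using C2_point[OF N2 ak, where \<beta>=\<beta>] unfolding N_def by blast
      have "global_min_on (fobj a \<beta>) csphere z1"
        unfolding global_min_on_def
      proof (intro conjI ballI z1(1))
        fix w :: "complex^'n" assume "w \<in> csphere"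
        then show "fobj a \<beta> z1 \<le> fobj a \<beta> w"
          using glob2[OF ak ab[unfolded N_def]] z1(3) unfolding N_def by simp
      qed
      then show ?thesis by blast
    qed
    then show ?thesis using conv[OF c] by blast
  qed
  show ?thesis using key conv ex by blast
qed

end
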